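(* For any subset $S\subseteq V$ with $T\subseteq S$ and $|S|\le 0.49n$, we have $\hat c(\delta_{\hat G}(S))\ge \hat c(\delta_{\hat G}(S\cup V_T))$.
   Context: All logarithms are base 2. Let $n$ be a large even integer, $V$ a set of $n$ vertices, $G=(V,E)$ a 10-regular multigraph on $V$ (the union of 10 perfect matchings); $\mathrm{dist}_G$ is hop distance. Fix a small constant $\varepsilon>0$, $\alpha=\frac{\log 5}{\log 5+1-\varepsilon}$, and a terminal set $T\subseteq V$ of size $\lfloor n/2^{(\log n)^\alpha}\rfloor$. For $i\ge 0$ let $N_i=\{u:\min_{t\in T}\mathrm{dist}_G(u,t)=i\}$ and $B_i=N_0\cup\dots\cup N_i$; let $m=\lfloor 10n/(\log n)^\alpha\rfloor$, $r=\min\{i:|B_i|\ge 2m\}-1$ and $V_T=B_r$. Let $E_{r+1}$ be the set of edges between $N_r$ and $N_{r+1}$. Build an edge set $E_T$ with values $c'$: for each $u\in N_r$, let $E_u$ be the set of edges of $E_{r+1}$ incident to $u$, pick an arbitrary edge $e_u$ from $u$ to a vertex of $N_{r-1}$, and add $e_u$ to $E_T$ with $c'(e_u)=|E_u|$; then for $i=r-1,\dots,1$ in turn, for each $u\in N_i$ let $E_u$ be the set of edges currently in $E_T$ incident to $u$, pick an arbitrary edge $e_u$ from $u$ to a vertex of $N_{i-1}$, and add it to $E_T$ with $c'(e_u)=\sum_{e\in E_u}c'(e)$. Define $\hat G=(V,\hat E,\hat c)$ by $\hat E=E\setminus E'$ where $E'$ is the set of edges of $G$ with both endpoints in $V_T$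 that are not in $E_T$; $\hat c(e)=c'(e)$ for $e\in E_T$ and $\hat c(e)=1$ otherwise. For $S\subseteq V$, $\delta_{\hat G}(S)$ is the set of edges of $\hat G$ with exactly one endpoint in $S$, and $\hat c$ of an edge set is the sum of capacities. *)

theory Defs
  imports Complex_Main
begin

text \<open>The multigraph G on V is the union of 10 perfect matchings M 0, ..., M 9,
  each given as a fixed-point-free involution on V. An edge is identified by
  the index k of its matching together with its endpoint set {u, M k u};
  thus parallel edges coming from different matchings are distinct.\<close>

definition perfect_matching :: "'a set \<Rightarrow> ('a \<Rightarrow> 'a) \<Rightarrow> bool" where
  "perfect_matching V f \<longleftrightarrow> (\<forall>u\<in>V. f u \<in> V \<and> f u \<noteq> u \<and> f (f u) = u)"

definition gedges :: "'a set \<Rightarrow> (nat \<Rightarrow> 'a \<Rightarrow> 'a) \<Rightarrow> (nat \<times> 'a set) set" where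
  "gedges V M = {(k, {u, M k u}) | k u. k < 10 \<and> u \<in> V}"

definition adjrel :: "'a set \<Rightarrow> (nat \<Rightarrow> 'a \<Rightarrow> 'a) \<Rightarrow> ('a \<times> 'a) set" where
  "adjrel V M = {(u, M k u) | u k. u \<in> V \<and> k < 10}"

definition layer :: "'a set \<Rightarrow> (nat \<Rightarrow> 'a \<Rightarrow> 'a) \<Rightarrow> 'a set \<Rightarrow> nat \<Rightarrow> 'a set" where
  "layer V M T i = {u \<in> V. (\<exists>t\<in>T. (t, u) \<in> adjrel V M ^^ i)
                          \<and> (\<forall>j<i. \<forall>t\<in>T. (t, u) \<notin> adjrel V M ^^ j)}"

definition ball :: "'a set \<Rightarrow> (nat \<Rightarrow> 'a \<Rightarrow> 'a) \<Rightarrow> 'a set \<Rightarrow> nat \<Rightarrow> 'a set" where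
  "ball V M T i = (\<Union>j\<le>i. layer V M T j)"

definition alpha :: "real \<Rightarrow> real" where
  "alpha \<epsilon> = log 2 5 / (log 2 5 + 1 - \<epsilon>)"

definition tsize :: "real \<Rightarrow> nat \<Rightarrow> nat" where
  "tsize \<epsilon> n = nat \<lfloor>real n / 2 powr ((log 2 (real n)) powr alpha \<epsilon>)\<rfloor>"

definition msize :: "real \<Rightarrow> nat \<Rightarrow> nat" where
  "msize \<epsilon> n = nat \<lfloor>10 * real n / (log 2 (real n)) powr alpha \<epsilon>\<rfloor>"

definition radius :: "'a set \<Rightarrow> (nat \<Rightarrow> 'a \<Rightarrow> 'a) \<Rightarrow> 'a set \<Rightarrow> nat \<Rightarrow> nat" where
  "radius V M T m = (LEAST i. 2 * m \<le> card (ball V M T i)) - 1"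

text \<open>The arbitrary choice of e_u is encoded by a function par: e_u is the
  edge of matching par u at u, i.e. (par u, {u, M (par u) u}).\<close>
definition tedge :: "(nat \<Rightarrow> 'a \<Rightarrow> 'a) \<Rightarrow> ('a \<Rightarrow> nat) \<Rightarrow> 'a \<Rightarrow> nat \<times> 'a set" where
  "tedge M par u = (par u, {u, M (par u) u})"

definition valid_par :: "'a set \<Rightarrow> (nat \<Rightarrow> 'a \<Rightarrow> 'a) \<Rightarrow> 'a set \<Rightarrow> nat \<Rightarrow> ('a \<Rightarrow> nat) \<Rightarrow> bool" where
  "valid_par V M T r par \<longleftrightarrow>
     (\<forall>i\<in>{1..r}. \<forall>u\<in>layer V M T i. par u < 10 \<and> M (par u) u \<in> layer V M T (i - 1))"

definition Eout :: "'a set \<Rightarrow> (nat \<Rightarrow> 'a \<Rightarrow> 'a) \<Rightarrow> 'a set \<Rightarrow> nat \<Rightarrow> (nat \<times> 'a set) set" where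
  "Eout V M T r = {e \<in> gedges V M. \<exists>a\<in>layer V M T r. \<exists>b\<in>layer V M T (r + 1). snd e = {a, b}}"

text \<open>cst ... d u: value c'(e_u) recorded after processing levels r, r-1, ..., r-d
  (level r is processed at d = 0). For u in level i < r, E_u consists of the
  edges e_w already in E_T (w in levels i+1..r) that are incident to u.\<close>
primrec cst :: "'a set \<Rightarrow> (nat \<Rightarrow> 'a \<Rightarrow> 'a) \<Rightarrow> 'a set \<Rightarrow> nat \<Rightarrow> ('a \<Rightarrow> nat) \<Rightarrow> nat \<Rightarrow> 'a \<Rightarrow> nat" where
  "cst V M T r par 0 =
     (\<lambda>u. if u \<in> layer V M T r then card {e \<in> Eout V M T r. u \<in> snd e} else 0)"
| "cst V M T r par (Suc d) =
     (\<lambda>u. if u \<in> layer V M T (r - Suc d)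
          then (\<Sum>w \<in> {w \<in> ball V M T r - ball V M T (r - Suc d). u \<in> snd (tedge M par w)}.
                  cst V M T r par d w)
          else cst V M T r par d u)"

definition cfinal :: "'a set \<Rightarrow> (nat \<Rightarrow> 'a \<Rightarrow> 'a) \<Rightarrow> 'a set \<Rightarrow> nat \<Rightarrow> ('a \<Rightarrow> nat) \<Rightarrow> 'a \<Rightarrow> nat" where
  "cfinal V M T r par = cst V M T r par (r - 1)"

definition ETree :: "'a set \<Rightarrow> (nat \<Rightarrow> 'a \<Rightarrow> 'a) \<Rightarrow> 'a set \<Rightarrow> nat \<Rightarrow> ('a \<Rightarrow> nat) \<Rightarrow> (nat \<times> 'a set) set" where
  "ETree V M T r par = tedge M par ` (ball V M T r - layer V M T 0)"

definition Ehat :: "'a set \<Rightarrow> (nat \<Rightarrow> 'a \<Rightarrow> 'a) \<Rightarrow> 'a set \<Rightarrow> nat \<Rightarrow> ('a \<Rightarrow> nat) \<Rightarrow> (nat \<times> 'a set) set" where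
  "Ehat V M T r par = gedges V M -
     {e \<in> gedges V M. snd e \<subseteq> ball V M T r \<and> e \<notin> ETree V M T r par}"

definition chat :: "'a set \<Rightarrow> (nat \<Rightarrow> 'a \<Rightarrow> 'a) \<Rightarrow> 'a set \<Rightarrow> nat \<Rightarrow> ('a \<Rightarrow> nat) \<Rightarrow> nat \<times> 'a set \<Rightarrow> nat" where
  "chat V M T r par e =
     (if e \<in> ETree V M T r par
      then cfinal V M T r par (SOME w. w \<in> ball V M T r - layer V M T 0 \<and> tedge M par w = e)
      else 1)"

definition cut :: "'a set \<Rightarrow> (nat \<Rightarrow> 'a \<Rightarrow> 'a) \<Rightarrow> 'a set \<Rightarrow> nat \<Rightarrow> ('a \<Rightarrow> nat) \<Rightarrow> 'a set \<Rightarrow> (nat \<times> 'a set) set" where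
  "cut V M T r par S = {e \<in> Ehat V M T r par. card (snd e \<inter> S) = 1}"

definition cutcap :: "'a set \<Rightarrow> (nat \<Rightarrow> 'a \<Rightarrow> 'a) \<Rightarrow> 'a set \<Rightarrow> nat \<Rightarrow> ('a \<Rightarrow> nat) \<Rightarrow> 'a set \<Rightarrow> nat" where
  "cutcap V M T r par S = (\<Sum>e \<in> cut V M T r par S. chat V M T r par e)"

end

theory Submission
  imports Defs
begin


lemma layer_sub: "layer V M T i \<subseteq> V"
  by (auto simp: layer_def)

lemma layer_disj: "u \<in> layer V M T i \<Longrightarrow> u \<in> layer V M T j \<Longrightarrow> i = j"
proof (rule ccontr)
  assume a: "u \<in> layer V M T i" "u \<in> layer V M T j" "i \<noteq> j"
  show False
  proof (cases "i < j")
    case True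
    from a(1) obtain t where "t \<in> T" "(t, u) \<in> adjrel V M ^^ i" unfolding layer_def by blast
    moreover from a(2) have "\<forall>k<j. \<forall>t\<in>T. (t, u) \<notin> adjrel V M ^^ k" unfolding layer_def by blast
    ultimately show False using True by blast
  next
    case False
    hence "j < i" using a(3) by simp
    from a(2) obtain t where "t \<in> T" "(t, u) \<in> adjrel V M ^^ j" unfolding layer_def by blast
    moreover from a(1) have "\<forall>k<i. \<forall>t\<in>T. (t, u) \<notin> adjrel V M ^^ k" unfolding layer_def by blast
    ultimately show False using \<open>j < i\<close> by blast
  qed
qed

lemma layer0: "layer V M T 0 = T \<inter> V"
  by (auto simp: layer_def)

lemma reach_layer:
  assumes "u \<in> V" "t \<in> T" "(t,u) \<in> adjrel V M ^^ n"
  shows "\<exists>j\<le>n. u \<in> layer V M T j"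
proof -
  define j where "j = (LEAST j. \<exists>t\<in>T. (t,u) \<in> adjrel V M ^^ j)"
  have ex: "\<exists>t\<in>T. (t,u) \<in> adjrel V M ^^ j" unfolding j_def
    by (rule LeastI[of _ n]) (use assms in blast)
  have "j \<le> n" unfolding j_def by (rule Least_le) (use assms in blast)
  moreover have "\<forall>j'<j. \<forall>t\<in>T. (t, u) \<notin> adjrel V M ^^ j'"
    using not_less_Least j_def by blast
  ultimately show ?thesis using ex assms(1) by (auto simp: layer_def)
qed

lemma nbr_layer:
  assumes "u \<in> layer V M T i" "k < 10" "perfect_matching V (M k)"
  shows "\<exists>j\<le>Suc i. M k u \<in> layer V M T j"
proof -
  from assms(1) obtain t where t: "t \<in> T" "(t,u) \<in> adjrel V M ^^ i" "u \<in> V"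
    unfolding layer_def by blast
  have "(u, M k u) \<in> adjrel V M" using t(3) assms(2) by (auto simp: adjrel_def)
  hence "(t, M k u) \<in> adjrel V M ^^ Suc i" using t(2) by (rule relpow_Suc_I[rotated])
  moreover have "M k u \<in> V" using assms(3) t(3) unfolding perfect_matching_def by blast
  ultimately show ?thesis using reach_layer[OF _ t(1)] by blast
qed

lemma ball_iff: "u \<in> ball V M T r \<longleftrightarrow> (\<exists>j\<le>r. u \<in> layer V M T j)"
  by (auto simp: ball_def)

lemma sum_cover_le:
  fixes f :: "'b \<Rightarrow> nat"
  assumes "finite I" "\<And>i. i \<in> I \<Longrightarrow> finite (A i)" "X \<subseteq> (\<Union>i\<in>I. A i)"
  shows "sum f X \<le> (\<Sum>i\<in>I. sum f (A i))"
proof -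
  have "sum f X \<le> sum f (\<Union>i\<in>I. A i)"
    using assms by (intro sum_mono2) auto
  also have "\<dots> \<le> (\<Sum>i\<in>I. sum f (A i))"
    using assms(1,2)
  proof (induction I rule: finite_induct)
    case (insert x F)
    have "sum f (\<Union>i\<in>insert x F. A i) = sum f (A x \<union> (\<Union>i\<in>F. A i))" by simp
    also have "\<dots> \<le> sum f (A x) + sum f (\<Union>i\<in>F. A i)"
      using insert by (simp add: sum_Un_nat)
    also have "\<dots> \<le> sum f (A x) + (\<Sum>i\<in>F. sum f (A i))" using insert by auto
    finally show ?case using insert by simp
  qed simp
  finally show ?thesis .
qed

locale ctx =
  fixes V :: "'a set" and M :: "nat \<Rightarrow> 'a \<Rightarrow> 'a" and T :: "'a set" and r :: nat
    and par :: "'a \<Rightarrow> nat" and S :: "'a set"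
  assumes finV: "finite V" and pm: "\<And>k. k < 10 \<Longrightarrow> perfect_matching V (M k)"
    and vp: "valid_par V M T r par" and TS: "T \<subseteq> S"
begin

abbreviation "L \<equiv> layer V M T"
abbreviation "B \<equiv> ball V M T r"
definition P where "P w = M (par w) w"
definition dout where "dout a = card {e \<in> Eout V M T r. a \<in> snd e}"

lemma vpD: "u \<in> L i \<Longrightarrow> 1 \<le> i \<Longrightarrow> i \<le> r \<Longrightarrow> par u < 10 \<and> P u \<in> L (i - 1)"
  using vp by (auto simp: valid_par_def P_def)

lemma Piter: "a \<in> L r \<Longrightarrow> k \<le> r \<Longrightarrow> (P^^k) a \<in> L (r - k)"
proof (induction k)
  case (Suc k)
  then have "(P^^k) a \<in> L (r - k)" using Suc.IH by linarith
  moreover have "1 \<le> r - k" "r - k \<le> r" using Suc.prems by auto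
  ultimately have 1: "P ((P^^k) a) \<in> L (r - k - 1)" using vpD[of "(P^^k) a" "r - k"] by blast
  have 2: "r - Suc k = r - k - 1" by linarith
  have 3: "(P^^Suc k) a = P ((P^^k) a)" by simp
  show ?case unfolding 2 3 by (rule 1)
qed simp

lemma cst_formula:
  "d < r \<Longrightarrow> u \<in> L (r - d) \<Longrightarrow>
     cst V M T r par d u = (\<Sum>a\<in>{a \<in> L r. (P^^d) a = u}. dout a)"
proof (induction d arbitrary: u)
  case 0
  have "{a \<in> L r. a = u} = {u}" using 0 by auto
  then show ?case using 0 by (simp add: dout_def)
next
  case (Suc d)
  define W where "W = {w \<in> B - ball V M T (r - Suc d). u \<in> snd (tedge M par w)}"
  have W: "W = {w \<in> L (r - d). P w = u}"
  proof safe
    fix w assume w: "w \<in> W"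
    then obtain j where j: "j \<le> r" "w \<in> L j" by (auto simp: W_def ball_iff)
    have jgt: "j > r - Suc d"
    proof (rule ccontr)
      assume "\<not> ?thesis" thus False using w j by (auto simp: W_def ball_iff)
    qed
    have "u \<noteq> w"
    proof
      assume "u = w"
      hence "j = r - Suc d" using layer_disj[of w V M T j "r - Suc d"] j(2) Suc.prems(2) by blast
      thus False using jgt by simp
    qed
    hence Pw: "P w = u" using w by (auto simp: W_def tedge_def P_def)
    have "P w \<in> L (j - 1)" using vpD[OF j(2)] jgt j by auto
    hence "j - 1 = r - Suc d" using layer_disj[of "P w" V M T "j - 1" "r - Suc d"] Suc.prems Pw by simp
    hence "j = r - d" using jgt Suc.prems by linarith
    thus "w \<in> L (r - d)" using j by simp
    show "P w = u" by fact
  next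
    fix w assume w: "w \<in> L (r - d)" "u = P w"
    have "w \<in> B" using w unfolding ball_iff by (intro exI[of _ "r - d"]) simp
    moreover have "w \<notin> ball V M T (r - Suc d)"
    proof
      assume "w \<in> ball V M T (r - Suc d)"
      then obtain j where j: "j \<le> r - Suc d" "w \<in> L j" by (auto simp: ball_iff)
      hence "j = r - d" using layer_disj[of w V M T j "r - d"] w(1) by blast
      thus False using j Suc.prems by linarith
    qed
    ultimately show "w \<in> W" using w by (auto simp: W_def tedge_def P_def)
  qed
  have finL: "finite (L i)" for i using finV layer_sub finite_subset by metis
  have "cst V M T r par (Suc d) u = (\<Sum>w\<in>W. cst V M T r par d w)"
    using Suc.prems by (simp add: W_def)
  also have "\<dots> = (\<Sum>w\<in>W. \<Sum>a\<in>{a \<in> L r. (P^^d) a = w}. dout a)"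
    using Suc.IH Suc.prems by (intro sum.cong) (auto simp: W)
  also have "\<dots> = (\<Sum>w\<in>W. \<Sum>a\<in>{a. a \<in> {a \<in> L r. (P^^Suc d) a = u} \<and> (P^^d) a = w}. dout a)"
    by (intro sum.cong refl) (auto simp: W)
  also have "\<dots> = (\<Sum>a\<in>{a \<in> L r. (P^^Suc d) a = u}. dout a)"
  proof (rule sum.group)
    show "finite {a \<in> L r. (P ^^ Suc d) a = u}" using finL by auto
    show "finite W" unfolding W using finL by auto
    show "(P ^^ d) ` {a \<in> L r. (P ^^ Suc d) a = u} \<subseteq> W"
      unfolding W using Piter Suc.prems by auto
  qed
  finally show ?case .
qed

lemma cst_stable:
  assumes "u \<in> L j" "1 \<le> j" "j \<le> r" "r - j \<le> d"
  shows "cst V M T r par d u = cst V M T r par (r - j) u"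
  using assms(4)
proof (induction d)
  case 0
  then have "r - j = 0" by linarith
  then show ?case by (simp only:)
next
  case (Suc d)
  show ?case
  proof (cases "r - j = Suc d")
    case True
    then show ?thesis by (simp only:)
  next
    case False
    hence le: "r - j \<le> d" using Suc.prems by linarith
    have nl: "u \<notin> L (r - Suc d)"
    proof
      assume "u \<in> L (r - Suc d)"
      hence "j = r - Suc d" using layer_disj[of u V M T j "r - Suc d"] assms(1) by blast
      thus False using assms(2,3) le by linarith
    qed
    have "cst V M T r par (Suc d) u = cst V M T r par d u"
      using nl by (simp only: cst.simps if_False)
    also have "\<dots> = cst V M T r par (r - j) u" using Suc.IH le by blast
    finally show ?thesis .
  qed
qed

lemma cfinal_formula:
  assumes "w \<in> L j" "1 \<le> j" "j \<le> r"
  shows "cfinal V M T r par w = (\<Sum>a\<in>{a \<in> L r. (P^^(r - j)) a = w}. dout a)"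
proof -
  have "cfinal V M T r par w = cst V M T r par (r - j) w"
  proof -
    have "r - j \<le> r - 1" using assms(2) by linarith
    from cst_stable[OF assms this] show ?thesis unfolding cfinal_def .
  qed
  also have "\<dots> = (\<Sum>a\<in>{a \<in> L r. (P^^(r - j)) a = w}. dout a)"
    using assms by (intro cst_formula) auto
  finally show ?thesis .
qed

end



lemma gedges_finite: "finite V \<Longrightarrow> finite (gedges V M)"
proof -
  assume "finite V"
  have "gedges V M = (\<lambda>(k,u). (k, {u, M k u})) ` ({..<10} \<times> V)"
    unfolding gedges_def by auto
  thus ?thesis using \<open>finite V\<close> by simp
qed

lemma gedges_one:
  assumes "e \<in> gedges V M" "card (snd e \<inter> A) = 1" "\<And>k. k < 10 \<Longrightarrow> perfect_matching V (M k)"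
  shows "\<exists>a. a \<in> A \<and> a \<in> V \<and> fst e < 10 \<and> snd e = {a, M (fst e) a} \<and> M (fst e) a \<notin> A"
proof -
  obtain k u where e: "e = (k, {u, M k u})" "k < 10" "u \<in> V" using assms(1) by (auto simp: gedges_def)
  have pm: "M k u \<in> V" "M k u \<noteq> u" "M k (M k u) = u"
    using assms(3)[OF e(2)] e(3) unfolding perfect_matching_def by blast+
  show ?thesis
  proof (cases "u \<in> A")
    case True
    hence "M k u \<notin> A" using assms(2) pm(2) e by (auto simp: card_insert_if split: if_splits)
    thus ?thesis using True e by auto
  next
    case False
    hence "M k u \<in> A" using assms(2) e by (cases "M k u \<in> A") auto
    thus ?thesis using False e pm by (intro exI[of _ "M k u"]) auto
  qed
qed

lemma gedges_card:
  assumes "e \<in> gedges V M" "\<And>k. k < 10 \<Longrightarrow> perfect_matching V (M k)"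
  shows "card (snd e) = 2"
proof -
  obtain k u where e: "e = (k, {u, M k u})" "k < 10" "u \<in> V" using assms(1) by (auto simp: gedges_def)
  have "M k u \<noteq> u"
    using assms(2)[OF e(2)] e(3) unfolding perfect_matching_def by blast
  thus ?thesis using e by auto
qed

context ctx
begin

abbreviation "te \<equiv> tedge M par"

lemma finL: "finite (L i)" using finite_subset[OF layer_sub finV] .

lemma finB: "finite B" using finL by (simp add: ball_def)

lemma lay: "w \<in> B - L 0 \<Longrightarrow> \<exists>j. w \<in> L j \<and> 1 \<le> j \<and> j \<le> r"
proof -
  assume w: "w \<in> B - L 0"
  hence "w \<in> B" by (rule DiffD1)
  then obtain j where "j \<le> r" "w \<in> L j" unfolding ball_iff by (elim exE conjE)
  moreover have "j \<noteq> 0"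
  proof
    assume "j = 0"
    thus False using w calculation by simp
  qed
  ultimately show ?thesis by (intro exI[of _ j]) simp
qed

lemma lay_B: "w \<in> L j \<Longrightarrow> j \<le> r \<Longrightarrow> w \<in> B"
  unfolding ball_iff by blast

lemma te_props:
  assumes "w \<in> B - L 0"
  shows "te w \<in> gedges V M" "snd (te w) = {w, P w}" "w \<in> B" "P w \<in> B" "P w \<noteq> w"
proof -
  obtain j where j: "w \<in> L j" "1 \<le> j" "j \<le> r" using lay[OF assms] by blast
  have pw: "par w < 10" "P w \<in> L (j - 1)" using vpD[OF j] by auto
  have wV: "w \<in> V" using subsetD[OF layer_sub j(1)] .
  show "te w \<in> gedges V M" using pw wV by (auto simp: tedge_def gedges_def)
  show "snd (te w) = {w, P w}" by (simp add: tedge_def P_def)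
  show "w \<in> B" using assms by blast
  show "P w \<in> B" using lay_B[OF pw(2)] j by simp
  show "P w \<noteq> w" using layer_disj[of w V M T j "j - 1"] pw j by auto
qed

lemma te_inj: "inj_on te (B - L 0)"
proof
  fix w w' assume w: "w \<in> B - L 0" and w': "w' \<in> B - L 0" and eq: "te w = te w'"
  show "w = w'"
  proof (rule ccontr)
    assume ne: "w \<noteq> w'"
    have "{w, P w} = {w', P w'}" using eq te_props w w' by metis
    hence 1: "w = P w'" and 2: "w' = P w" using ne by (auto simp: doubleton_eq_iff)
    obtain j where j: "w \<in> L j" "1 \<le> j" "j \<le> r" using lay[OF w] by blast
    obtain j' where j': "w' \<in> L j'" "1 \<le> j'" "j' \<le> r" using lay[OF w'] by blast
    have "P w \<in> L (j - 1)" using vpD[OF j] by auto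
    hence "j' = j - 1" using layer_disj[of w' V M T j' "j - 1"] j' 2 by simp
    have "P w' \<in> L (j' - 1)" using vpD[OF j'] by auto
    hence "j = j' - 1" using layer_disj[of w V M T j "j' - 1"] j 1 by simp
    thus False using \<open>j' = j - 1\<close> j' by linarith
  qed
qed

lemma chat_te: "w \<in> B - L 0 \<Longrightarrow> chat V M T r par (te w) = cfinal V M T r par w"
proof -
  assume w: "w \<in> B - L 0"
  have mem: "te w \<in> ETree V M T r par" using w by (simp add: ETree_def)
  have "(SOME w'. w' \<in> B - L 0 \<and> te w' = te w) = w"
  proof (rule some_equality)
    show "w \<in> B - L 0 \<and> te w = te w" using w by simp
    fix w' assume "w' \<in> B - L 0 \<and> te w' = te w"
    thus "w' = w" using te_inj w by (meson inj_onD)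
  qed
  thus ?thesis using mem by (simp add: chat_def)
qed

lemma ETree_sub: "e \<in> ETree V M T r par \<Longrightarrow> snd e \<subseteq> B \<and> e \<in> gedges V M"
  unfolding ETree_def using te_props by auto

definition sub where "sub w = {a \<in> L r. \<exists>k\<le>r. (P^^k) a = w}"

lemma sub_eq: "w \<in> L j \<Longrightarrow> j \<le> r \<Longrightarrow> sub w = {a \<in> L r. (P^^(r - j)) a = w}"
proof safe
  fix a assume "w \<in> L j" "j \<le> r" "a \<in> sub w"
  then obtain k where k: "k \<le> r" "(P^^k) a = w" "a \<in> L r" by (auto simp: sub_def)
  hence "w \<in> L (r - k)" using Piter by blast
  hence "j = r - k" using layer_disj[of w V M T j "r - k"] \<open>w \<in> L j\<close> by simp
  hence "k = r - j" using k \<open>j \<le> r\<close> by linarith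
  thus "(P^^(r - j)) a = w" using k by simp
qed (auto simp: sub_def intro!: exI[of _ "r - j"])

lemma cover:
  assumes a: "a \<in> L r - S"
  shows "\<exists>w. w \<in> B - S \<and> P w \<in> S \<and> a \<in> sub w"
proof -
  have aL: "a \<in> L r" using a by (rule DiffD1)
  have ar: "(P^^r) a \<in> L 0" using Piter[OF aL, of r] by simp
  hence "(P^^r) a \<in> T" unfolding layer0 by (rule IntD1)
  hence "(P^^r) a \<in> S" using TS by (rule subsetD[rotated])
  define k where "k = (LEAST k. (P^^k) a \<in> S)"
  have kS: "(P^^k) a \<in> S" unfolding k_def by (rule LeastI) fact
  have kr: "k \<le> r" unfolding k_def by (rule Least_le) fact
  have k0: "k \<noteq> 0"
  proof
    assume "k = 0"
    hence "a \<in> S" using kS by simp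
    thus False using a by blast
  qed
  have nS: "(P^^(k - 1)) a \<notin> S"
  proof -
    have "k - 1 < k" using k0 by simp
    thus ?thesis unfolding k_def by (rule not_less_Least)
  qed
  have L: "(P^^(k - 1)) a \<in> L (r - (k - 1))" using Piter[OF aL] kr by simp
  have "(P^^(k - 1)) a \<in> B" using lay_B[OF L] by simp
  moreover have "P ((P^^(k - 1)) a) \<in> S"
    using kS k0 by (metis Suc_pred' bot_nat_0.not_eq_extremum comp_apply funpow.simps(2))
  moreover have "a \<in> sub ((P^^(k - 1)) a)" using aL kr unfolding sub_def
    by (auto intro!: exI[of _ "k - 1"])
  ultimately show ?thesis using nS by blast
qed

lemma main: "cutcap V M T r par (S \<union> B) \<le> cutcap V M T r par S"
proof -
  define C1 where "C1 = cut V M T r par (S \<union> B)"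
  define C0 where "C0 = cut V M T r par S"
  define top where "top = {w \<in> B - S. P w \<in> S}"
  define F where "F = (\<Union>a\<in>L r - S. {e \<in> Eout V M T r. a \<in> snd e})"
  define ch where "ch = chat V M T r par"
  have finG: "finite (gedges V M)" using gedges_finite finV by blast
  have finC1: "finite C1" by (rule finite_subset[OF _ finG]) (auto simp: C1_def cut_def Ehat_def)
  have finC0: "finite C0" by (rule finite_subset[OF _ finG]) (auto simp: C0_def cut_def Ehat_def)
  have top_sub: "top \<subseteq> B - L 0" unfolding top_def layer0 using TS by blast
  have finTop: "finite top" using finB top_def by simp
  have ch1: "ch e = 1" if "e \<in> C1" for e
  proof -
    have "e \<notin> ETree V M T r par"
    proof
      assume "e \<in> ETree V M T r par"
      hence "snd e \<subseteq> B" "e \<in> gedges V M" using ETree_sub by auto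
      hence "card (snd e \<inter> (S \<union> B)) = 2" using gedges_card pm
        by (metis Int_absorb2 le_supI2)
      thus False using that by (simp add: C1_def cut_def)
    qed
    thus ?thesis by (simp add: ch_def chat_def)
  qed
  have cc1: "cutcap V M T r par (S \<union> B) = card C1"
    unfolding cutcap_def C1_def[symmetric] ch_def[symmetric] using ch1 by simp
  have C1F: "C1 - C0 \<subseteq> F"
  proof
    fix e assume e: "e \<in> C1 - C0"
    hence eG: "e \<in> gedges V M" and c1: "card (snd e \<inter> (S \<union> B)) = 1"
      by (auto simp: C1_def cut_def Ehat_def)
    have c0: "card (snd e \<inter> S) \<noteq> 1" using e by (auto simp: C1_def C0_def cut_def)
    obtain a where a: "a \<in> S \<union> B" "a \<in> V" "fst e < 10" "snd e = {a, M (fst e) a}"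
      "M (fst e) a \<notin> S \<union> B"
      using gedges_one[OF eG c1 pm] by blast
    have "a \<notin> S"
    proof
      assume "a \<in> S"
      hence "snd e \<inter> S = {a}" using a by auto
      thus False using c0 by simp
    qed
    hence aB: "a \<in> B" using a by blast
    then obtain i where i: "i \<le> r" "a \<in> L i" by (auto simp: ball_iff)
    obtain j where j: "j \<le> Suc i" "M (fst e) a \<in> L j" using nbr_layer[OF i(2) a(3) pm[OF a(3)]] by blast
    have "\<not> j \<le> r" using j a(5) lay_B by blast
    hence ji: "j = Suc r" "i = r" using i j by auto
    have "e \<in> Eout V M T r" unfolding Eout_def using eG i j ji a(4) by auto
    thus "e \<in> F" unfolding F_def using \<open>a \<notin> S\<close> i ji a(4) by auto
  qed
  have "card F \<le> (\<Sum>a\<in>L r - S. dout a)"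
    unfolding F_def dout_def using finL by (intro card_UN_le) auto
  also have "\<dots> \<le> (\<Sum>w\<in>top. sum dout (sub w))"
  proof (rule sum_cover_le)
    show "finite top" by fact
    show "finite (sub w)" for w using finL by (simp add: sub_def)
    show "L r - S \<subseteq> (\<Union>w\<in>top. sub w)" using cover unfolding top_def by blast
  qed
  also have "\<dots> = (\<Sum>w\<in>top. ch (te w))"
  proof (rule sum.cong[OF refl])
    fix w assume w: "w \<in> top"
    hence wB: "w \<in> B - L 0" using top_sub by blast
    obtain j where j: "w \<in> L j" "1 \<le> j" "j \<le> r" using lay[OF wB] by blast
    show "sum dout (sub w) = ch (te w)"
      unfolding ch_def chat_te[OF wB] cfinal_formula[OF j] sub_eq[OF j(1,3)] ..
  qed
  also have "\<dots> = sum ch (te ` top)"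
    using te_inj top_sub by (simp add: sum.reindex inj_on_subset)
  finally have Fle: "card F \<le> sum ch (te ` top)" .
  have D0: "te ` top \<subseteq> C0 - C1"
  proof
    fix e assume "e \<in> te ` top"
    then obtain w where w: "w \<in> top" "e = te w" by blast
    have wB: "w \<in> B - L 0" using w top_sub by blast
    note tp = te_props[OF wB]
    have "e \<in> Ehat V M T r par" using tp w(2) wB by (auto simp: Ehat_def ETree_def)
    moreover have "snd e \<inter> S = {P w}" using tp w unfolding top_def by auto
    moreover have "card (snd e \<inter> (S \<union> B)) = 2" using tp w by auto
    ultimately show "e \<in> C0 - C1" by (simp add: C0_def C1_def cut_def)
  qed
  have "card C1 = card (C1 \<inter> C0) + card (C1 - C0)"
    using finC1 by (rule card_Int_Diff)
  also have "\<dots> \<le> card (C1 \<inter> C0) + card F"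
  proof -
    have "finite F" by (rule finite_subset[OF _ finG]) (auto simp: F_def Eout_def)
    hence "card (C1 - C0) \<le> card F" using C1F by (rule card_mono)
    thus ?thesis by simp
  qed
  also have "\<dots> \<le> sum ch (C1 \<inter> C0) + sum ch (te ` top)"
    using ch1 Fle by simp
  also have "\<dots> = sum ch ((C1 \<inter> C0) \<union> te ` top)"
    using D0 finC1 finC0 finTop by (intro sum.union_disjoint[symmetric]) auto
  also have "\<dots> \<le> sum ch C0"
    using D0 finC0 by (intro sum_mono2) auto
  finally show ?thesis using cc1 by (simp add: cutcap_def C0_def ch_def)
qed

end

theorem lemma3p10:
  shows "\<exists>\<epsilon>0>0. \<forall>\<epsilon>::real. 0 < \<epsilon> \<and> \<epsilon> < \<epsilon>0 \<longrightarrow>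
    (\<exists>N::nat. \<forall>(V::'a set) (M::nat \<Rightarrow> 'a \<Rightarrow> 'a) (T::'a set) (par::'a \<Rightarrow> nat) (S::'a set).
       finite V \<and> N \<le> card V \<and> even (card V) \<and>
       (\<forall>k<10. perfect_matching V (M k)) \<and>
       T \<subseteq> V \<and> card T = tsize \<epsilon> (card V) \<and>
       (\<exists>i. 2 * msize \<epsilon> (card V) \<le> card (ball V M T i)) \<and>
       valid_par V M T (radius V M T (msize \<epsilon> (card V))) par \<and>
       T \<subseteq> S \<and> S \<subseteq> V \<and> real (card S) \<le> 0.49 * real (card V)
       \<longrightarrow> (let r = radius V M T (msize \<epsilon> (card V)) in
            cutcap V M T r par (S \<union> ball V M T r) \<le> cutcap V M T r par S))"
  proof (intro exI[of _ "1::real"] conjI allI impI)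
  show "(0::real) < 1" by simp
  fix \<epsilon> :: real
  assume "0 < \<epsilon> \<and> \<epsilon> < 1"
  show "\<exists>N::nat. \<forall>(V::'a set) (M::nat \<Rightarrow> 'a \<Rightarrow> 'a) (T::'a set) (par::'a \<Rightarrow> nat) (S::'a set).
       finite V \<and> N \<le> card V \<and> even (card V) \<and>
       (\<forall>k<10. perfect_matching V (M k)) \<and>
       T \<subseteq> V \<and> card T = tsize \<epsilon> (card V) \<and>
       (\<exists>i. 2 * msize \<epsilon> (card V) \<le> card (ball V M T i)) \<and>
       valid_par V M T (radius V M T (msize \<epsilon> (card V))) par \<and>
       T \<subseteq> S \<and> S \<subseteq> V \<and> real (card S) \<le> 0.49 * real (card V)
       \<longrightarrow> (let r = radius V M T (msize \<epsilon> (card V)) in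
            cutcap V M T r par (S \<union> ball V M T r) \<le> cutcap V M T r par S)"
  proof (intro exI[of _ "0::nat"] allI impI)
    fix V :: "'a set" and M :: "nat \<Rightarrow> 'a \<Rightarrow> 'a" and T :: "'a set" and par :: "'a \<Rightarrow> nat" and S :: "'a set"
    assume h: "finite V \<and> 0 \<le> card V \<and> even (card V) \<and>
       (\<forall>k<10. perfect_matching V (M k)) \<and>
       T \<subseteq> V \<and> card T = tsize \<epsilon> (card V) \<and>
       (\<exists>i. 2 * msize \<epsilon> (card V) \<le> card (ball V M T i)) \<and>
       valid_par V M T (radius V M T (msize \<epsilon> (card V))) par \<and>
       T \<subseteq> S \<and> S \<subseteq> V \<and> real (card S) \<le> 0.49 * real (card V)"
    define r where "r = radius V M T (msize \<epsilon> (card V))"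
    have "ctx V M T r par S"
      using h unfolding r_def by unfold_locales blast+
    hence "cutcap V M T r par (S \<union> ball V M T r) \<le> cutcap V M T r par S"
      by (rule ctx.main)
    thus "let r = radius V M T (msize \<epsilon> (card V)) in
            cutcap V M T r par (S \<union> ball V M T r) \<le> cutcap V M T r par S"
      unfolding r_def Let_def .
  qed
qed

end
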